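(* Let $I=(G,c,F_{\rm in},\mathcal{H},k)$ be a reduced instance of RGBP in which every habitat has at most $6$ vertices and $G$ has maximum degree at most $3$, and let $H\in\mathcal{H}$ with $|H|=6$. If $\{H,H'\}$ is an edge of the basic habitat graph $\mathcal{G}_{G,F_{\rm in},\mathcal{H}}$ for some $H'\in\mathcal{H}$, then $H'\subseteq H$.
   Context: All graphs are finite, simple and undirected. For a graph $G=(V,E)$, $H\subseteq V$ and $F\subseteq E$, let $G[H,F]$ be the graph with vertex set $H$ and edge set $\{\{u,v\}\in F\mid u,v\in H\}$, and $G[H]=G[H,E]$. A graph is 2-connected if it has at least three vertices and remains connected after deleting any single vertex. An instance of RGBP is $(G,c,F_{\rm in},\mathcal{H},k)$ with $G=(V,E)$, costs $c\colon E\to\mathbb{N}_0$, forced edges $F_{\rm in}\subseteq E$, a set $\mathcal{H}$ of subsets of $V$ (habitats) and an integer $k$; the question is whether there is $F$ with $F_{\rm in}\subseteq F\subseteq E$, $\sum_{e\in F}c(e)\leq k$ and $G[H,F]$ 2-connected for all $H\in\mathcal{H}$. The instance is reduced if none of the following rules applies: (1) some $H\in\mathcal{H}$ has $G[H]$ not 2-connected (then answer no); (2) two habitats in $\mathcal{H}$ are equal (delete one); (3) for some habitat $H$ there is an edge $e\in E(G[H])\setminus F_{\rm in}$ such that $G[H]-e$ is not 2-connected (add $e$ to $F_{\rm in}$); (4) some habitat $H$ has $G[H,F_{\rm in}]$ 2-connected (delete $H$); (5) some edge $e\in E$ lies in no $G[H]$, $H\in\mathcal{H}$ (delete $e$, and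 if $e\in F_{\rm in}$ decrease $k$ by $c(e)$). The basic habitat graph $\mathcal{G}_{G,F_{\rm in},\mathcal{H}}$ has vertex set $\mathcal{H}$ and an edge $\{H,H'\}$ whenever $(E(G[H])\cap E(G[H']))\setminus F_{\rm in}\neq\emptyset$. *)

theory Defs
  imports Main
begin

definition simple_graph :: "'a set \<Rightarrow> 'a set set \<Rightarrow> bool" where
  "simple_graph V E \<longleftrightarrow> finite V \<and> (\<forall>e\<in>E. e \<subseteq> V \<and> card e = 2)"

definition edges_in :: "'a set \<Rightarrow> 'a set set \<Rightarrow> 'a set set" where
  "edges_in H F = {e \<in> F. e \<subseteq> H}"

definition adj :: "'a set \<Rightarrow> 'a set set \<Rightarrow> ('a \<times> 'a) set" where
  "adj H F = {(u, v). u \<in> H \<and> v \<in> H \<and> {u, v} \<in> edges_in H F}"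

definition connected_on :: "'a set \<Rightarrow> 'a set set \<Rightarrow> bool" where
  "connected_on H F \<longleftrightarrow> (\<forall>u\<in>H. \<forall>v\<in>H. (u, v) \<in> (adj H F)\<^sup>*)"

text \<open>G[H,F] is 2-connected: at least three vertices and connected after deleting any vertex.
  (Connectedness of G[H,F] itself follows from this when |H| >= 3, but we state it anyway.)\<close>
definition two_connected :: "'a set \<Rightarrow> 'a set set \<Rightarrow> bool" where
  "two_connected H F \<longleftrightarrow> finite H \<and> card H \<ge> 3 \<and> connected_on H F \<and>
     (\<forall>x\<in>H. connected_on (H - {x}) F)"

definition rgbp_instance ::
  "'a set \<Rightarrow> 'a set set \<Rightarrow> ('a set \<Rightarrow> nat) \<Rightarrow> 'a set set \<Rightarrow> 'a set set \<Rightarrow> int \<Rightarrow> bool" where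
  "rgbp_instance V E c Fin Hs k \<longleftrightarrow> simple_graph V E \<and> Fin \<subseteq> E \<and> finite Hs \<and> (\<forall>H\<in>Hs. H \<subseteq> V)"

text \<open>Reduced: none of rules (1)-(5) applies. Rule (2) never applies since habitats form a set.\<close>
definition reduced ::
  "'a set \<Rightarrow> 'a set set \<Rightarrow> ('a set \<Rightarrow> nat) \<Rightarrow> 'a set set \<Rightarrow> 'a set set \<Rightarrow> int \<Rightarrow> bool" where
  "reduced V E c Fin Hs k \<longleftrightarrow>
     (\<forall>H\<in>Hs. two_connected H E) \<and>
     (\<forall>H\<in>Hs. \<forall>e\<in>edges_in H E - Fin. two_connected H (E - {e})) \<and>
     (\<forall>H\<in>Hs. \<not> two_connected H Fin) \<and>
     (\<forall>e\<in>E. \<exists>H\<in>Hs. e \<in> edges_in H E)"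

definition max_degree_le :: "'a set \<Rightarrow> 'a set set \<Rightarrow> nat \<Rightarrow> bool" where
  "max_degree_le V E d \<longleftrightarrow> (\<forall>v\<in>V. card {e \<in> E. v \<in> e} \<le> d)"

text \<open>Edge {H,H'} of the basic habitat graph (simple graph, so H \<noteq> H').\<close>
definition habitat_graph_edge :: "'a set set \<Rightarrow> 'a set set \<Rightarrow> 'a set set \<Rightarrow> 'a set \<Rightarrow> 'a set \<Rightarrow> bool" where
  "habitat_graph_edge E Fin Hs H H' \<longleftrightarrow> H \<in> Hs \<and> H' \<in> Hs \<and> H \<noteq> H' \<and>
     (edges_in H E \<inter> edges_in H' E) - Fin \<noteq> {}"

end

theory Submission
  imports Defs
begin

lemma path_exit:
  assumes "connected_on Y F" "a \<in> A" "A \<subseteq> Y" "b \<in> Y" "b \<notin> A"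
  shows "\<exists>y y'. y \<in> A \<and> y' \<in> Y \<and> y' \<notin> A \<and> {y,y'} \<in> F"
proof (rule ccontr)
  assume C: "\<not> ?thesis"
  have "(a,b) \<in> (adj Y F)\<^sup>*" using assms unfolding connected_on_def by blast
  then have "b \<in> A"
  proof (induction rule: rtrancl_induct)
    case base then show ?case using assms by simp
  next
    case (step y z)
    then have "z \<in> Y" "{y,z} \<in> F" unfolding adj_def edges_in_def by auto
    then show ?case using step C by blast
  qed
  then show False using assms by simp
qed

lemma mindeg:
  assumes "two_connected X F" "p \<in> X"
  shows "\<exists>q1 q2. q1 \<noteq> q2 \<and> q1 \<in> X \<and> q2 \<in> X \<and> q1 \<noteq> p \<and> q2 \<noteq> p \<and> {p,q1} \<in> F \<and> {p,q2} \<in> F"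
proof -
  have fin: "finite X" and c3: "card X \<ge> 3" and co: "connected_on X F"
    and co2: "\<forall>x\<in>X. connected_on (X - {x}) F"
    using assms unfolding two_connected_def by auto
  have "\<exists>b. b \<in> X \<and> b \<noteq> p"
  proof (rule ccontr)
    assume "\<not> ?thesis" then have "X \<subseteq> {p}" by auto
    then have "card X \<le> card {p}" by (intro card_mono) auto
    then have "card X \<le> 1" by simp
    then show False using c3 by simp
  qed
  then obtain b where b: "b \<in> X" "b \<noteq> p" by blast
  from path_exit[OF co, of p "{p}" b] b assms(2)
  obtain q1 where q1: "q1 \<in> X" "q1 \<noteq> p" "{p,q1} \<in> F" by auto
  have "\<exists>b. b \<in> X \<and> b \<noteq> p \<and> b \<noteq> q1"
  proof (rule ccontr)
    assume "\<not> ?thesis" then have "X \<subseteq> {p,q1}" by auto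
    then have "card X \<le> card {p,q1}" by (intro card_mono) auto
    also have "\<dots> \<le> 2" by (simp add: card_insert_if)
    finally have "card X \<le> 2" .
    then show False using c3 by simp
  qed
  then obtain b2 where b2: "b2 \<in> X" "b2 \<noteq> p" "b2 \<noteq> q1" by blast
  from path_exit[OF co2[rule_format, OF q1(1)], of p "{p}" b2] b2 assms(2) q1
  obtain q2 where q2: "q2 \<in> X" "q2 \<noteq> q1" "q2 \<noteq> p" "{p,q2} \<in> F" by auto
  show ?thesis using q1 q2 by blast
qed

lemma tc_mono:
  assumes "two_connected X F" "\<forall>e\<in>F. e \<subseteq> X \<longrightarrow> e \<in> F'"
  shows "two_connected X F'"
proof -
  have ei: "\<And>Y. Y \<subseteq> X \<Longrightarrow> adj Y F \<subseteq> adj Y F'"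
    using assms(2) unfolding adj_def edges_in_def by auto
  have co: "\<And>Y. Y \<subseteq> X \<Longrightarrow> connected_on Y F \<Longrightarrow> connected_on Y F'"
    unfolding connected_on_def using rtrancl_mono[OF ei] by blast
  show ?thesis using assms(1) co unfolding two_connected_def by blast
qed

lemma deg4:
  assumes "simple_graph V E" "max_degree_le V E 3"
    "{p,a} \<in> E" "{p,b} \<in> E" "{p,c} \<in> E" "{p,d} \<in> E"
    "a \<noteq> b" "a \<noteq> c" "a \<noteq> d" "b \<noteq> c" "b \<noteq> d" "c \<noteq> d"
  shows False
proof -
  have fin: "finite E" using assms(1) unfolding simple_graph_def
    by (meson Pow_iff finite_Pow_iff finite_subset subsetI)
  have pV: "p \<in> V" using assms(1,3) unfolding simple_graph_def by auto
  have ne: "p \<noteq> a" "p \<noteq> b" "p \<noteq> c" "p \<noteq> d" using assms(1,3-6) unfolding simple_graph_def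
    by force+
  have sub: "{{p,a},{p,b},{p,c},{p,d}} \<subseteq> {e \<in> E. p \<in> e}" using assms by auto
  have "card {{p,a},{p,b},{p,c},{p,d}} = 4" using assms ne by (auto simp: doubleton_eq_iff)
  moreover have "card {e \<in> E. p \<in> e} \<le> 3" using assms(2) pV unfolding max_degree_le_def by blast
  moreover have "card {{p,a},{p,b},{p,c},{p,d}} \<le> card {e \<in> E. p \<in> e}"
    using card_mono[OF _ sub] fin by auto
  ultimately show False by simp
qed

definition full :: "'a set set \<Rightarrow> 'a set \<Rightarrow> 'a \<Rightarrow> bool" where
  "full E X p \<longleftrightarrow> (\<exists>a b c. a \<noteq> b \<and> a \<noteq> c \<and> b \<noteq> c \<and> a \<in> X \<and> b \<in> X \<and> c \<in> X \<and>
     {p,a} \<in> E \<and> {p,b} \<in> E \<and> {p,c} \<in> E)"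

lemma keyK:
  assumes red: "reduced V E c Fin Hs k" and X: "X \<in> Hs"
    and uv: "{u,v} \<in> edges_in X E" "{u,v} \<notin> Fin" and sg: "simple_graph V E"
  shows "\<exists>p q. {p,q} \<in> E \<and> {p,q} \<noteq> {u,v} \<and> p \<in> X \<and> q \<in> X \<and> full E X p \<and> full E X q"
proof (rule ccontr)
  assume C: "\<not> ?thesis"
  have tc: "two_connected X (E - {{u,v}})" using red X uv unfolding reduced_def by blast
  have fl: "full E X p" if tce: "two_connected X (E - {{p,q}})" and pX: "p \<in> X" and qX: "q \<in> X"
    and pq: "{p,q} \<in> E" and ne: "p \<noteq> q" for p q
  proof -
    obtain q1 q2 where q: "q1 \<noteq> q2" "q1 \<in> X" "q2 \<in> X" "q1 \<noteq> p" "q2 \<noteq> p"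
      "{p,q1} \<in> E - {{p,q}}" "{p,q2} \<in> E - {{p,q}}" using mindeg[OF tce pX] by blast
    then have "q1 \<noteq> q" "q2 \<noteq> q" by auto
    then show ?thesis unfolding full_def using q pq qX by blast
  qed
  have "\<forall>e\<in>E - {{u,v}}. e \<subseteq> X \<longrightarrow> e \<in> Fin"
  proof (intro ballI impI)
    fix e assume e: "e \<in> E - {{u,v}}" "e \<subseteq> X"
    show "e \<in> Fin"
    proof (rule ccontr)
      assume "e \<notin> Fin"
      then have "e \<in> edges_in X E - Fin" using e by (simp add: edges_in_def)
      then have tce: "two_connected X (E - {e})" using red X unfolding reduced_def by blast
      have "card e = 2" using e sg unfolding simple_graph_def by blast
      then obtain p q where pq: "e = {p,q}" "p \<noteq> q" by (meson card_2_iff)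
      have "full E X p" using fl[of p q] tce pq e by auto
      moreover have "full E X q" using fl[of q p] tce pq e by (auto simp: insert_commute)
      ultimately show False using C pq e by blast
    qed
  qed
  then have "two_connected X Fin" using tc_mono[OF tc] by blast
  then show False using red X unfolding reduced_def by blast
qed

lemma side:
  assumes DG: "\<And>p a b c d. {p,a}\<in>E \<Longrightarrow> {p,b}\<in>E \<Longrightarrow> {p,c}\<in>E \<Longrightarrow> {p,d}\<in>E \<Longrightarrow>
      a\<noteq>b \<Longrightarrow> a\<noteq>c \<Longrightarrow> a\<noteq>d \<Longrightarrow> b\<noteq>c \<Longrightarrow> b\<noteq>d \<Longrightarrow> c\<noteq>d \<Longrightarrow> False"
    and irr: "\<And>p. {p,p} \<notin> E"
    and X: "X \<subseteq> {u,v,x,y0,y1,z}"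
    and dist: "distinct [u,v,x,y0,y1,z,ob]"
    and Nu: "\<forall>q. {u,q} \<in> E \<longrightarrow> q \<in> {v,x,y0}" and Nv: "\<forall>q. {v,q} \<in> E \<longrightarrow> q \<in> {u,x,y1}"
    and E1: "{u,x} \<in> E" "{u,y0} \<in> E" "{v,x} \<in> E" "{v,y1} \<in> E" "{u,v} \<in> E"
    and E2: "{x,z} \<notin> E" "{y0,z} \<in> E" "{y1,z} \<in> E"
    and o2: "\<exists>p1 p2. p1 \<noteq> p2 \<and> p1 \<in> {x,y0,y1} \<and> p2 \<in> {x,y0,y1} \<and> {p1,ob}\<in>E \<and> {p2,ob}\<in>E"
    and K: "\<exists>p q. {p,q} \<in> E \<and> {p,q} \<noteq> {u,v} \<and> p \<in> X \<and> q \<in> X \<and> full E X p \<and> full E X q"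
  shows False
proof -
  have sym: "\<And>p q. {p,q}\<in>E \<Longrightarrow> {q,p}\<in>E" by (simp add: insert_commute)
  have d: "u\<noteq>v" "u\<noteq>x" "u\<noteq>y0" "u\<noteq>y1" "u\<noteq>z" "u\<noteq>ob" "v\<noteq>x" "v\<noteq>y0" "v\<noteq>y1" "v\<noteq>z" "v\<noteq>ob"
    "x\<noteq>y0" "x\<noteq>y1" "x\<noteq>z" "x\<noteq>ob" "y0\<noteq>y1" "y0\<noteq>z" "y0\<noteq>ob" "y1\<noteq>z" "y1\<noteq>ob" "z\<noteq>ob"
    using dist by auto
  obtain p1 p2 where p: "p1 \<noteq> p2" "p1 \<in> {x,y0,y1}" "p2 \<in> {x,y0,y1}" "{p1,ob}\<in>E" "{p2,ob}\<in>E"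
    using o2 by blast
  have nxy0: "{x,y0} \<notin> E"
  proof
    assume a: "{x,y0} \<in> E"
    have "{x,ob} \<notin> E" using DG[of x u v y0 ob] sym E1 a d by blast
    moreover have "{y0,ob} \<notin> E" using DG[of y0 u z x ob] sym E1 E2 a d by blast
    ultimately show False using p by auto
  qed
  have nxy1: "{x,y1} \<notin> E"
  proof
    assume a: "{x,y1} \<in> E"
    have "{x,ob} \<notin> E" using DG[of x u v y1 ob] sym E1 a d by blast
    moreover have "{y1,ob} \<notin> E" using DG[of y1 v z x ob] sym E1 E2 a d by blast
    ultimately show False using p by auto
  qed
  have ny01: "{y0,y1} \<notin> E"
  proof
    assume a: "{y0,y1} \<in> E"
    have "{y0,ob} \<notin> E" using DG[of y0 u z y1 ob] sym E1 E2 a d by blast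
    moreover have "{y1,ob} \<notin> E" using DG[of y1 v z y0 ob] sym E1 E2 a d by blast
    ultimately show False using p by auto
  qed
  have Nx: "\<And>q. q \<in> X \<Longrightarrow> {x,q} \<in> E \<Longrightarrow> q \<in> {u,v}"
    using X irr E2 nxy0 nxy1 by auto
  have Ny0: "\<And>q. q \<in> X \<Longrightarrow> {y0,q} \<in> E \<Longrightarrow> q \<in> {u,z}"
  proof -
    fix q assume q: "q \<in> X" "{y0,q} \<in> E"
    have "q \<noteq> v" using Nv q d sym by blast
    moreover have "q \<noteq> x" "q \<noteq> y1" "q \<noteq> y0" using nxy0 ny01 irr q sym by blast+
    ultimately show "q \<in> {u,z}" using X q by auto
  qed
  have Ny1: "\<And>q. q \<in> X \<Longrightarrow> {y1,q} \<in> E \<Longrightarrow> q \<in> {v,z}"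
  proof -
    fix q assume q: "q \<in> X" "{y1,q} \<in> E"
    have "q \<noteq> u" using Nu q d sym by blast
    moreover have "q \<noteq> x" "q \<noteq> y1" "q \<noteq> y0" using nxy1 ny01 irr q sym by blast+
    ultimately show "q \<in> {v,z}" using X q by auto
  qed
  have nf1: "\<not> full E X x"
  proof
    assume "full E X x"
    then obtain a b c where abc: "a\<noteq>b" "a\<noteq>c" "b\<noteq>c" "a\<in>X" "b\<in>X" "c\<in>X"
      "{x,a}\<in>E" "{x,b}\<in>E" "{x,c}\<in>E" unfolding full_def by blast
    then have "a \<in> {u,v}" "b \<in> {u,v}" "c \<in> {u,v}" using Nx by blast+
    then show False using abc(1-3) by auto
  qed
  have nf2: "\<not> full E X y0"
  proof
    assume "full E X y0"
    then obtain a b c where abc: "a\<noteq>b" "a\<noteq>c" "b\<noteq>c" "a\<in>X" "b\<in>X" "c\<in>X"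
      "{y0,a}\<in>E" "{y0,b}\<in>E" "{y0,c}\<in>E" unfolding full_def by blast
    then have "a \<in> {u,z}" "b \<in> {u,z}" "c \<in> {u,z}" using Ny0 by blast+
    then show False using abc(1-3) by auto
  qed
  have nf3: "\<not> full E X y1"
  proof
    assume "full E X y1"
    then obtain a b c where abc: "a\<noteq>b" "a\<noteq>c" "b\<noteq>c" "a\<in>X" "b\<in>X" "c\<in>X"
      "{y1,a}\<in>E" "{y1,b}\<in>E" "{y1,c}\<in>E" unfolding full_def by blast
    then have "a \<in> {v,z}" "b \<in> {v,z}" "c \<in> {v,z}" using Ny1 by blast+
    then show False using abc(1-3) by auto
  qed
  note nf = nf1 nf2 nf3
  obtain p q where pq: "{p,q} \<in> E" "{p,q} \<noteq> {u,v}" "p \<in> X" "q \<in> X" "full E X p" "full E X q"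
    using K by blast
  have "p \<in> {u,v,z}" "q \<in> {u,v,z}" using pq nf X by auto
  moreover have "p \<noteq> q" using pq irr by blast
  moreover have "{u,z} \<notin> E" "{v,z} \<notin> E" using Nu Nv d by auto
  moreover have "{q,p} \<in> E" using pq(1) by (rule sym)
  moreover have "p = z \<or> q = z"
  proof (rule ccontr)
    assume "\<not> (p = z \<or> q = z)"
    then have "p \<in> {u,v}" "q \<in> {u,v}" using \<open>p \<in> {u,v,z}\<close> \<open>q \<in> {u,v,z}\<close> by auto
    then have "{p,q} = {u,v}" using \<open>p \<noteq> q\<close> by auto
    then show False using pq(2) by simp
  qed
  ultimately show False
  proof -
    assume pz: "p \<in> {u,v,z}" "q \<in> {u,v,z}" and pnq: "p \<noteq> q" and nuz: "{u,z} \<notin> E" "{v,z} \<notin> E"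
      and qp: "{q,p} \<in> E" and zz: "p = z \<or> q = z"
    show False
    proof (cases "p = z")
      case True
      then have "q = u \<or> q = v" using pz(2) pnq by simp
      then show False
      proof
        assume "q = u" then show False using qp True nuz(1) by simp
      next
        assume "q = v" then show False using qp True nuz(2) by simp
      qed
    next
      case False
      then have qz: "q = z" using zz by simp
      have "p = u \<or> p = v" using False pz(1) by simp
      then show False
      proof
        assume "p = u" then show False using pq(1) qz nuz(1) by simp
      next
        assume "p = v" then show False using pq(1) qz nuz(2) by simp
      qed
    qed
  qed
qed

lemma dcard: "finite X \<Longrightarrow> distinct xs \<Longrightarrow> set xs \<subseteq> X \<Longrightarrow> length xs \<le> card X"
  by (metis distinct_card card_mono)

theorem lemma15:
  fixes V :: "'a set" and E Fin Hs :: "'a set set" and c :: "'a set \<Rightarrow> nat" and k :: int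
    and H H' :: "'a set"
  assumes "rgbp_instance V E c Fin Hs k"
    and "reduced V E c Fin Hs k"
    and "\<forall>X\<in>Hs. card X \<le> 6"
    and "max_degree_le V E 3"
    and "H \<in> Hs" and "card H = 6"
    and "H' \<in> Hs" and "habitat_graph_edge E Fin Hs H H'"
  shows "H' \<subseteq> H"
proof (rule ccontr)
  assume "\<not> H' \<subseteq> H" then obtain w where w: "w \<in> H'" "w \<notin> H" by blast
  have sg: "simple_graph V E" using assms(1) unfolding rgbp_instance_def by auto
  have md: "max_degree_le V E 3" using assms(4) .
  have tcH: "two_connected H E" and tcH': "two_connected H' E" using assms(2,5,7) unfolding reduced_def by auto
  have finH: "finite H" "finite H'" using tcH tcH' unfolding two_connected_def by auto
  have cH: "card H = 6" "card H' \<le> 6" using assms(3,6,7) by auto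
  from assms(8) obtain e where e: "e \<in> edges_in H E" "e \<in> edges_in H' E" "e \<notin> Fin"
    unfolding habitat_graph_edge_def by blast
  then have eE: "e \<in> E" and eH: "e \<subseteq> H" and eH': "e \<subseteq> H'" by (auto simp: edges_in_def)
  have "card e = 2" using eE sg unfolding simple_graph_def by blast
  then obtain u v where uv: "e = {u,v}" "u \<noteq> v" by (meson card_2_iff)
  have uvH: "u\<in>H" "v\<in>H" "u\<in>H'" "v\<in>H'" using eH eH' uv by auto
  have tcHe: "two_connected H (E - {e})" and tcH'e: "two_connected H' (E - {e})"
    using assms(2,5,7) e unfolding reduced_def by blast+
  have DG: "\<And>p a b c d. {p,a}\<in>E \<Longrightarrow> {p,b}\<in>E \<Longrightarrow> {p,c}\<in>E \<Longrightarrow> {p,d}\<in>E \<Longrightarrow>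
      a\<noteq>b \<Longrightarrow> a\<noteq>c \<Longrightarrow> a\<noteq>d \<Longrightarrow> b\<noteq>c \<Longrightarrow> b\<noteq>d \<Longrightarrow> c\<noteq>d \<Longrightarrow> False"
    using deg4[OF sg md] by blast
  have irr: "\<And>p. {p,p} \<notin> E" using sg unfolding simple_graph_def by force
  have sym: "\<And>p q. {p,q}\<in>E \<Longrightarrow> {q,p}\<in>E" by (simp add: insert_commute)
  have uvE: "{u,v} \<in> E" using eE uv by simp
  have vuE: "{v,u} \<in> E" using uvE sym by blast
  obtain a b where ab: "a\<noteq>b" "a\<in>H" "b\<in>H" "a\<noteq>u" "b\<noteq>u" "{u,a} \<in> E - {e}" "{u,b}\<in>E-{e}"
    using mindeg[OF tcHe uvH(1)] by blast
  have ab2: "a\<noteq>v" "b\<noteq>v" "{u,a}\<in>E" "{u,b}\<in>E" using ab uv by auto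
  have Nu0: "\<forall>q. {u,q}\<in>E \<longrightarrow> q=v \<or> q=a \<or> q=b"
  proof (intro allI impI)
    fix q assume "{u,q}\<in>E"
    then show "q=v \<or> q=a \<or> q=b" using DG[OF uvE ab2(3) ab2(4)] ab ab2 by blast
  qed
  obtain a' b' where ab': "a'\<noteq>b'" "a'\<in>H'" "b'\<in>H'" "a'\<noteq>u" "b'\<noteq>u" "{u,a'} \<in> E - {e}" "{u,b'}\<in>E-{e}"
    using mindeg[OF tcH'e uvH(3)] by blast
  have "a' \<noteq> v" "b' \<noteq> v" using ab' uv by auto
  then have abH': "a\<in>H'" "b\<in>H'" using Nu0 ab' by auto
  obtain c d where cd: "c\<noteq>d" "c\<in>H" "d\<in>H" "c\<noteq>v" "d\<noteq>v" "{v,c} \<in> E - {e}" "{v,d}\<in>E-{e}"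
    using mindeg[OF tcHe uvH(2)] by blast
  have cd2: "c\<noteq>u" "d\<noteq>u" "{v,c}\<in>E" "{v,d}\<in>E" using cd uv by auto
  have Nv0: "\<forall>q. {v,q}\<in>E \<longrightarrow> q=u \<or> q=c \<or> q=d"
  proof (intro allI impI)
    fix q assume "{v,q}\<in>E"
    then show "q=u \<or> q=c \<or> q=d" using DG[OF vuE cd2(3) cd2(4)] cd cd2 by blast
  qed
  obtain c' d' where cd': "c'\<noteq>d'" "c'\<in>H'" "d'\<in>H'" "c'\<noteq>v" "d'\<noteq>v" "{v,c'} \<in> E - {e}" "{v,d'}\<in>E-{e}"
    using mindeg[OF tcH'e uvH(4)] by blast
  have "c' \<noteq> u" "d' \<noteq> u" using cd' uv by (auto simp: insert_commute)
  then have cdH': "c\<in>H'" "d\<in>H'" using Nv0 cd' by auto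
  obtain z where z: "z \<in> H" "z \<notin> H'"
  proof (rule ccontr)
    assume "\<not> thesis"
    then have "insert w H \<subseteq> H'" using that w by blast
    then have "card (insert w H) \<le> card H'" using finH card_mono by blast
    then show False using cH w finH by simp
  qed
  have NuH: "\<And>q. {u,q}\<in>E \<Longrightarrow> q \<in> H \<and> q \<in> H'" using Nu0 ab abH' uvH by blast
  have NvH: "\<And>q. {v,q}\<in>E \<Longrightarrow> q \<in> H \<and> q \<in> H'" using Nv0 cd cdH' uvH by blast
  have coH: "connected_on H E" "\<forall>x\<in>H. connected_on (H - {x}) E" using tcH unfolding two_connected_def by auto
  obtain z1 x1 where zx1: "z1 \<in> H - H'" "x1 \<in> H" "x1 \<notin> H - H'" "{z1,x1} \<in> E"
    using path_exit[OF coH(1), of z "H - H'" u] z uvH by blast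
  have x1u: "x1 \<noteq> u" "x1 \<noteq> v" using zx1 NuH NvH sym by blast+
  obtain z2 x2 where zx2: "z2 \<in> H - H'" "x2 \<in> H - {x1}" "x2 \<notin> H - H'" "{z2,x2} \<in> E"
    using path_exit[OF coH(2)[rule_format, OF zx1(2)], of z1 "H - H'" u] zx1 x1u uvH by blast
  have x2u: "x2 \<noteq> u" "x2 \<noteq> v" using zx2 NuH NvH sym by blast+
  have coH': "connected_on H' E" "\<forall>x\<in>H'. connected_on (H' - {x}) E" using tcH' unfolding two_connected_def by auto
  obtain t1 r1 where tr1: "t1 \<in> H' - H" "r1 \<in> H'" "r1 \<notin> H' - H" "{t1,r1} \<in> E"
    using path_exit[OF coH'(1), of w "H' - H" u] w uvH by blast
  have r1u: "r1 \<noteq> u" "r1 \<noteq> v" using tr1 NuH NvH sym by blast+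
  obtain t2 r2 where tr2: "t2 \<in> H' - H" "r2 \<in> H' - {r1}" "r2 \<notin> H' - H" "{t2,r2} \<in> E"
    using path_exit[OF coH'(2)[rule_format, OF tr1(2)], of t1 "H' - H" u] tr1 r1u uvH by blast
  have r2u: "r2 \<noteq> u" "r2 \<noteq> v" using tr2 NuH NvH sym by blast+
  have Q4: "False" if "p1 \<in> H" "p1 \<in> H'" "p2 \<in> H" "p2 \<in> H'" "p3 \<in> H" "p3 \<in> H'" "p4 \<in> H" "p4 \<in> H'"
    "distinct [u,v,p1,p2,p3,p4]" for p1 p2 p3 p4
  proof -
    have "length [u,v,p1,p2,p3,p4,z] \<le> card H"
      by (rule dcard[OF finH(1)]) (use that z uvH in auto)
    then show False using cH by simp
  qed
  have CH: "\<forall>p\<in>H. p \<in> {u,v,s1,s2,s3,z}" if "s1 \<in> H" "s1 \<in> H'" "s2 \<in> H" "s2 \<in> H'" "s3 \<in> H" "s3 \<in> H'"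
    "distinct [u,v,s1,s2,s3]" for s1 s2 s3
  proof
    fix p assume p: "p \<in> H"
    show "p \<in> {u,v,s1,s2,s3,z}"
    proof (rule ccontr)
      assume np: "p \<notin> {u,v,s1,s2,s3,z}"
      show False
      proof (cases "p \<in> H'")
        case True then show False using Q4[of s1 s2 s3 p] that p np by auto
      next
        case False
        have "length [u,v,s1,s2,s3,z,p] \<le> card H"
          by (rule dcard[OF finH(1)]) (use that z uvH p np in auto)
        then show False using cH by simp
      qed
    qed
  qed
  have CH': "\<forall>p\<in>H'. p \<in> {u,v,s1,s2,s3,w}" if "s1 \<in> H" "s1 \<in> H'" "s2 \<in> H" "s2 \<in> H'" "s3 \<in> H" "s3 \<in> H'"
    "distinct [u,v,s1,s2,s3]" for s1 s2 s3
  proof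
    fix p assume p: "p \<in> H'"
    show "p \<in> {u,v,s1,s2,s3,w}"
    proof (rule ccontr)
      assume np: "p \<notin> {u,v,s1,s2,s3,w}"
      show False
      proof (cases "p \<in> H")
        case True then show False using Q4[of s1 s2 s3 p] that p np by auto
      next
        case False
        have "length [u,v,s1,s2,s3,w,p] \<le> card H'"
          by (rule dcard[OF finH(2)]) (use that w uvH p np in auto)
        then show False using cH by simp
      qed
    qed
  qed
  have uvF: "{u,v} \<in> edges_in H E" "{u,v} \<notin> Fin" "{u,v} \<in> edges_in H' E"
    using e uv by auto
  have KH: "\<exists>p q. {p,q} \<in> E \<and> {p,q} \<noteq> {u,v} \<and> p \<in> H \<and> q \<in> H \<and> full E H p \<and> full E H q"
    using keyK[OF assms(2) assms(5) uvF(1,2) sg] .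
  have KH': "\<exists>p q. {p,q} \<in> E \<and> {p,q} \<noteq> {u,v} \<and> p \<in> H' \<and> q \<in> H' \<and> full E H' p \<and> full E H' q"
    using keyK[OF assms(2) assms(7) uvF(3,2) sg] .
  show False
  proof (cases "{c,d} = {a,b}")
    case True
    then have Nv: "\<forall>q. {v,q}\<in>E \<longrightarrow> q=u \<or> q=a \<or> q=b" using Nv0 by (auto simp: doubleton_eq_iff)
    have vab: "{v,a} \<in> E" "{v,b} \<in> E" using True cd2 by (auto simp: doubleton_eq_iff)
    have "\<exists>e0. e0\<in>H \<and> e0\<in>H' \<and> e0 \<notin> {u,v,a,b}"
    proof (rule ccontr)
      assume N: "\<not> ?thesis"
      have xin: "x1 \<in> {a,b}" "x2 \<in> {a,b}" using N zx1 zx2 x1u x2u by auto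
      have rin: "r1 \<in> {a,b}" "r2 \<in> {a,b}" using N tr1 tr2 r1u r2u by auto
      have "\<exists>zz\<in>H-H'. {a,zz}\<in>E" using xin zx1 zx2 sym by auto
      then obtain zz where zz: "zz\<in>H-H'" "{a,zz}\<in>E" by blast
      have "\<exists>tt\<in>H'-H. {a,tt}\<in>E" using rin tr1 tr2 sym by auto
      then obtain tt where tt: "tt\<in>H'-H" "{a,tt}\<in>E" by blast
      show False using DG[of a u v zz tt] sym ab2 vab zz tt uvH uv by blast
    qed
    then obtain e0 where e0: "e0\<in>H" "e0\<in>H'" "e0 \<notin> {u,v,a,b}" by blast
    have dd: "distinct [u,v,a,b,e0]" using e0 ab ab2 uv by auto
    have CH1: "\<forall>p\<in>H. p \<in> {u,v,a,b,e0,z}" using CH[of a b e0] dd ab abH' e0 by auto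
    have CH1': "\<forall>p\<in>H'. p \<in> {u,v,a,b,e0,w}" using CH'[of a b e0] dd ab abH' e0 by auto
    have zz: "z1 = z" "z2 = z" using CH1 zx1 zx2 uvH abH' e0 by auto
    have tt: "t1 = w" "t2 = w" using CH1' tr1 tr2 uvH ab e0 by auto
    have xin: "x1 \<in> {a,b,e0}" "x2 \<in> {a,b,e0}" using CH1 zx1 zx2 x1u x2u z by auto
    have rin: "r1 \<in> {a,b,e0}" "r2 \<in> {a,b,e0}" using CH1' tr1 tr2 r1u r2u w by auto
    have xz: "{x1,z} \<in> E" "{x2,z} \<in> E" "{r1,w} \<in> E" "{r2,w} \<in> E"
      using zx1 zx2 tr1 tr2 zz tt sym by auto
    have zw: "z \<noteq> w" "z \<notin> {u,v,a,b,e0}" "w \<notin> {u,v,a,b,e0}" using z w uvH ab abH' e0 by auto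
    have naz: "\<not> ({a,z}\<in>E \<and> {a,w}\<in>E)" "\<not> ({b,z}\<in>E \<and> {b,w}\<in>E)"
      using DG[of a u v z w] DG[of b u v z w] sym ab2 vab zw uv by blast+
    have e0z: "{e0,z} \<in> E"
    proof (rule ccontr)
      assume "{e0,z} \<notin> E"
      then have "{a,z}\<in>E" "{b,z}\<in>E" using xin xz zx2 by auto
      moreover have "{a,w}\<in>E \<or> {b,w}\<in>E" using rin xz tr2 by auto
      ultimately show False using naz by blast
    qed
    have e0w: "{e0,w} \<in> E"
    proof (rule ccontr)
      assume "{e0,w} \<notin> E"
      then have "{a,w}\<in>E" "{b,w}\<in>E" using rin xz tr2 by auto
      moreover have "{a,z}\<in>E \<or> {b,z}\<in>E" using xin xz zx2 by auto
      ultimately show False using naz by blast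
    qed
    obtain q1 q2 where q: "q1 \<noteq> q2" "q1 \<in> H" "q2 \<in> H" "q1 \<noteq> e0" "q2 \<noteq> e0"
      "{e0,q1} \<in> E" "{e0,q2} \<in> E" using mindeg[OF tcH e0(1)] by blast
    have qz: "q = z" if qq: "q \<in> H" "q \<noteq> e0" "{e0,q} \<in> E" for q
    proof -
      have "q \<noteq> u" using Nu0 qq sym e0 by blast
      moreover have "q \<noteq> v" using Nv qq sym e0 by blast
      moreover have "q \<noteq> a"
      proof
        assume "q = a"
        then have ea: "{a,e0} \<in> E" using qq sym by blast
        have "{a,z} \<notin> E" "{a,w} \<notin> E" using DG[of a u v e0 z] DG[of a u v e0 w] ea sym ab2 vab zw e0 uv by blast+
        then have "{b,z}\<in>E" "{b,w}\<in>E" using xin rin xz zx2 tr2 by auto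
        then show False using naz by blast
      qed
      moreover have "q \<noteq> b"
      proof
        assume "q = b"
        then have ea: "{b,e0} \<in> E" using qq sym by blast
        have "{b,z} \<notin> E" "{b,w} \<notin> E" using DG[of b u v e0 z] DG[of b u v e0 w] ea sym ab2 vab zw e0 uv by blast+
        then have "{a,z}\<in>E" "{a,w}\<in>E" using xin rin xz zx2 tr2 by auto
        then show False using naz by blast
      qed
      ultimately show "q = z" using CH1 qq by auto
    qed
    show False using qz[of q1] qz[of q2] q by auto
  next
    case False
    have "\<exists>x y0 y1. distinct [x,y0,y1] \<and> {a,b} = {x,y0} \<and> {c,d} = {x,y1}"
    proof (rule ccontr)
      assume N: "\<not> ?thesis"
      have "a \<noteq> c"
      proof
        assume ac: "a = c"
        have "b \<noteq> d" using False ac by auto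
        then have "distinct [a,b,d] \<and> {a,b} = {a,b} \<and> {c,d} = {a,d}" using ab cd ac by auto
        then show False using N by blast
      qed
      moreover have "a \<noteq> d"
      proof
        assume ac: "a = d"
        have "b \<noteq> c" using False ac by auto
        then have "distinct [a,b,c] \<and> {a,b} = {a,b} \<and> {c,d} = {a,c}" using ab cd ac by auto
        then show False using N by blast
      qed
      moreover have "b \<noteq> c"
      proof
        assume ac: "b = c"
        have "a \<noteq> d" using False ac by auto
        then have "distinct [b,a,d] \<and> {a,b} = {b,a} \<and> {c,d} = {b,d}" using ab cd ac by auto
        then show False using N by blast
      qed
      moreover have "b \<noteq> d"
      proof
        assume ac: "b = d"
        have "a \<noteq> c" using False ac by auto
        then have "distinct [b,a,c] \<and> {a,b} = {b,a} \<and> {c,d} = {b,c}" using ab cd ac by auto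
        then show False using N by blast
      qed
      ultimately show False
        by (intro Q4[of a b c d]) (use ab(1-5) ab2(1,2) cd(1-5) cd2(1,2) abH' cdH' uv(2) in auto)
    qed
    then obtain x y0 y1 where xy: "distinct [x,y0,y1]" "{a,b} = {x,y0}" "{c,d} = {x,y1}" by blast
    have Nu: "\<forall>q. {u,q}\<in>E \<longrightarrow> q \<in> {v,x,y0}" using Nu0 xy by auto
    have Nv: "\<forall>q. {v,q}\<in>E \<longrightarrow> q \<in> {u,x,y1}" using Nv0 xy by auto
    have E1: "{u,x} \<in> E" "{u,y0} \<in> E" "{v,x} \<in> E" "{v,y1} \<in> E"
      using xy ab2 cd2 by (auto simp: doubleton_eq_iff)
    have inS: "x\<in>H" "x\<in>H'" "y0\<in>H" "y0\<in>H'" "y1\<in>H" "y1\<in>H'" using NuH NvH E1 by blast+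
    have xab: "x \<in> {a,b}" "y0 \<in> {a,b}" "x \<in> {c,d}" "y1 \<in> {c,d}"
      using xy(2,3) by (metis insertI1 insertI2)+
    have dd: "distinct [u,v,x,y0,y1]"
      using xab ab(4,5) ab2(1,2) cd(4,5) cd2(1,2) uv(2) xy(1) by auto
    have CH1: "\<forall>p\<in>H. p \<in> {u,v,x,y0,y1,z}" using CH[of x y0 y1] dd inS by auto
    have CH1': "\<forall>p\<in>H'. p \<in> {u,v,x,y0,y1,w}" using CH'[of x y0 y1] dd inS by auto
    have zz: "z1 = z" "z2 = z" using CH1 zx1 zx2 uvH inS by auto
    have tt: "t1 = w" "t2 = w" using CH1' tr1 tr2 uvH inS by auto
    have xin: "x1 \<in> {x,y0,y1}" "x2 \<in> {x,y0,y1}" using CH1 zx1 zx2 x1u x2u z by auto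
    have rin: "r1 \<in> {x,y0,y1}" "r2 \<in> {x,y0,y1}" using CH1' tr1 tr2 r1u r2u w by auto
    have xz: "{x1,z} \<in> E" "{x2,z} \<in> E" "{r1,w} \<in> E" "{r2,w} \<in> E"
      using zx1 zx2 tr1 tr2 zz tt sym by auto
    have zw: "z \<noteq> w" "z \<notin> {u,v,x,y0,y1}" "w \<notin> {u,v,x,y0,y1}" using z w uvH inS by auto
    show False
    proof (cases "{x,z} \<in> E")
      case False
      have yz: "{y0,z} \<in> E" "{y1,z} \<in> E" using xin xz zx2 False by auto
      have Xs: "H \<subseteq> {u,v,x,y0,y1,z}" using CH1 by blast
      have dist: "distinct [u,v,x,y0,y1,z,w]" using dd zw by auto
      have o2: "\<exists>p1 p2. p1 \<noteq> p2 \<and> p1 \<in> {x,y0,y1} \<and> p2 \<in> {x,y0,y1} \<and> {p1,w}\<in>E \<and> {p2,w}\<in>E"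
        using rin tr2(2) xz(3,4) by blast
      show False by (rule side[OF DG irr Xs dist Nu Nv E1 uvE False yz o2 KH])
    next
      case True
      have nxw: "{x,w} \<notin> E" using DG[of x u v z w] True sym E1 zw dd by auto
      have yw: "{y0,w} \<in> E" "{y1,w} \<in> E" using rin xz tr2 nxw by auto
      have Xs: "H' \<subseteq> {u,v,x,y0,y1,w}" using CH1' by blast
      have dist: "distinct [u,v,x,y0,y1,w,z]" using dd zw by auto
      have o2: "\<exists>p1 p2. p1 \<noteq> p2 \<and> p1 \<in> {x,y0,y1} \<and> p2 \<in> {x,y0,y1} \<and> {p1,z}\<in>E \<and> {p2,z}\<in>E"
        using xin zx2(2) xz(1,2) by blast
      show False by (rule side[OF DG irr Xs dist Nu Nv E1 uvE nxw yw o2 KH'])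
    qed
  qed
qed

end
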